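(* Let $\lambda$ be a partition and $T$ an $\mathbb{N}$-tableau of shape $\lambda$. Consider any ordering $b_1,\ldots,b_r$ of the boxes of $\lambda$ that is a linear extension of the poset $P_\lambda$ (where $(i,j)\le(k,l)$ iff $i\le k$ and $j\le l$), and let $T_s$ denote the restriction of $T$ to the boxes $b_1,\dots,b_s$ (so each $T_s$ is obtained from $T_{s-1}$ by adding the corner box $b_s$ with its entry from $T$). Starting from $\widehat{T_0}=\emptyset$ and applying the toggle step described in the context to pass from $\widehat{T_{s-1}}$ to $\widehat{T_s}$ for $s=1,\dots,r$, the resulting final tableau $\widehat{T_r}$ does not depend on the choice of linear extension. Thus the map $T\mapsto \widehat{T}$ is well defined.
   Context: Partitions are drawn in English notation with matrix coordinates: the box in row $i$ and column $j$ is $(i,j)$, and $(1,1)$ is the upper-left box. An $\mathbb{N}$-tableau of shape $\lambda$ is an assignment of a nonnegative integer to each box of $\lambda$. A corner box of a partition is a box $(i,j)$ such that neither $(i+1,j)$ nor $(i,j+1)$ is a box. Toggle step: Suppose $T'$ is obtained from an $\mathbb{N}$-tableau $T$ by adding a box $(i,j)$ (which is a corner box of $\mathrm{sh}(T')$) with entry $x$, and $\widehat{T}$ is a given $\mathbb{N}$-tableau of shape $\mathrm{sh}(T)$. For $k\ge1$ let $\beta_k$ be the entry of $\widehat{T}$ at $(i-k,j-k)$, $\gamma_k$ the entry at $(i-k+1,j-k)$ and $\alpha_k$ the entry at $(i-k,j-k+1)$, each taken to be $0$ if the corresponding box is not a box of $\mathrm{sh}(T)$ (in particular if a coordinate is nonpositive).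 Then $\widehat{T'}$ is the $\mathbb{N}$-tableau of shape $\mathrm{sh}(T')$ that agrees with $\widehat{T}$ except that for each $1\le k<\min(i,j)$ the entry at $(i-k,j-k)$ is replaced by $\max(\alpha_{k+1},\gamma_{k+1})+\min(\alpha_k,\gamma_k)-\beta_k$, and the entry at the new box $(i,j)$ is $\max(\alpha_1,\gamma_1)+x$. *)

theory Defs
  imports Main
begin

type_synonym box = "nat \<times> nat"

definition partition :: "nat list \<Rightarrow> bool" where
  "partition lam \<longleftrightarrow> sorted_wrt (\<ge>) lam \<and> 0 \<notin> set lam"

text \<open>Young diagram in English notation / matrix coordinates, boxes (i,j) with 1-based indices.\<close>
definition boxes :: "nat list \<Rightarrow> box set" where
  "boxes lam = {(i, j). 1 \<le> i \<and> i \<le> length lam \<and> 1 \<le> j \<and> j \<le> lam ! (i - 1)}"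

definition box_le :: "box \<Rightarrow> box \<Rightarrow> bool" where
  "box_le b c \<longleftrightarrow> fst b \<le> fst c \<and> snd b \<le> snd c"

definition linear_extension :: "nat list \<Rightarrow> box list \<Rightarrow> bool" where
  "linear_extension lam bs \<longleftrightarrow> distinct bs \<and> set bs = boxes lam \<and>
     (\<forall>p < length bs. \<forall>q < length bs. box_le (bs ! p) (bs ! q) \<longrightarrow> p \<le> q)"

definition entry :: "box set \<Rightarrow> (box \<Rightarrow> int) \<Rightarrow> box \<Rightarrow> int" where
  "entry S F b = (if b \<in> S then F b else 0)"

text \<open>Toggle step: S = sh(T), F = That (of shape S), new corner box (i,j) with entry x.
  Result is a tableau of shape insert (i,j) S (0 outside).\<close>
definition toggle_step :: "box set \<Rightarrow> (box \<Rightarrow> int) \<Rightarrow> box \<Rightarrow> int \<Rightarrow> box \<Rightarrow> int" where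
  "toggle_step S F c x = (case c of (i, j) \<Rightarrow>
     (let \<beta> = (\<lambda>k. entry S F (i - k, j - k));
          \<gamma> = (\<lambda>k. entry S F (i - k + 1, j - k));
          \<alpha> = (\<lambda>k. entry S F (i - k, j - k + 1))
      in (\<lambda>(a, b).
        if (a, b) \<notin> insert (i, j) S then 0
        else if (a, b) = (i, j) then max (\<alpha> 1) (\<gamma> 1) + x
        else if 1 \<le> a \<and> 1 \<le> b \<and> a < i \<and> b < j \<and> i - a = j - b then
          (let k = i - a in max (\<alpha> (k + 1)) (\<gamma> (k + 1)) + min (\<alpha> k) (\<gamma> k) - \<beta> k)
        else F (a, b))))"

definition toggle_state :: "(box \<Rightarrow> nat) \<Rightarrow> box set \<times> (box \<Rightarrow> int) \<Rightarrow> box \<Rightarrow> box set \<times> (box \<Rightarrow> int)" where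
  "toggle_state T st b = (insert b (fst st), toggle_step (fst st) (snd st) b (int (T b)))"

definition hat :: "(box \<Rightarrow> nat) \<Rightarrow> box list \<Rightarrow> box \<Rightarrow> int" where
  "hat T bs = snd (foldl (toggle_state T) ({}, (\<lambda>_. 0)) bs)"

end

theory Submission
  imports Defs
begin

definition nv :: "box set \<Rightarrow> (box \<Rightarrow> int) \<Rightarrow> nat \<Rightarrow> nat \<Rightarrow> int \<Rightarrow> int" where
  "nv S F i j x = max (entry S F (i-1,j-1+1)) (entry S F (i-1+1,j-1)) + x"
definition dv :: "box set \<Rightarrow> (box \<Rightarrow> int) \<Rightarrow> nat \<Rightarrow> nat \<Rightarrow> int" where
  "dv S F a b = max (entry S F (a-1,b)) (entry S F (a,b-1)) + min (entry S F (a,b+1)) (entry S F (a+1,b)) - entry S F (a,b)"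
definition cnd :: "nat \<Rightarrow> nat \<Rightarrow> nat \<Rightarrow> nat \<Rightarrow> bool" where
  "cnd i j a b \<longleftrightarrow> 1 \<le> a \<and> 1 \<le> b \<and> a < i \<and> b < j \<and> i - a = j - b"

lemma ts_eq: "toggle_step S F (i,j) x (a,b) = (if (a,b) \<notin> insert (i,j) S then 0
   else if (a,b) = (i,j) then nv S F i j x else if cnd i j a b then dv S F a b else F (a,b))"
proof -
  have *: "i - (i - a) = a" "j - (i - a) = b" "i - (i - a) + 1 = a + 1" "j - (i - a) + 1 = b + 1"
     "i - (i - a + 1) = a - 1" "j - (i - a + 1) = b - 1" if "cnd i j a b" using that unfolding cnd_def by auto
  show ?thesis unfolding toggle_step_def Let_def nv_def dv_def
    using * by (auto simp: cnd_def)
qed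

lemma D: "(a,b) \<noteq> (i,j) \<Longrightarrow> b + i \<noteq> a + j \<Longrightarrow>
  entry (insert (i,j) S) (toggle_step S F (i,j) x) (a,b) = entry S F (a,b)"
  unfolding entry_def by (auto simp: ts_eq cnd_def)

lemma D2: "b + i \<noteq> a + j \<Longrightarrow>
  entry (insert (i,j) S) (toggle_step S F (i,j) x) (a,b) = entry S F (a,b)"
  by (rule D) auto

lemma commute:
  assumes "1 \<le> i" "1 \<le> j" "1 \<le> i'" "1 \<le> j'" "i < i'" "j' < j"
  shows "toggle_step (insert (i,j) S) (toggle_step S F (i,j) x) (i',j') y
       = toggle_step (insert (i',j') S) (toggle_step S F (i',j') y) (i,j) x"
proof (rule ext, clarify)
  fix a b
  have nv1: "nv (insert (i,j) S) (toggle_step S F (i,j) x) i' j' y = nv S F i' j' y"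
  proof -
    have "entry (insert (i,j) S) (toggle_step S F (i,j) x) (i'-1, j'-1+1) = entry S F (i'-1, j'-1+1)"
      by (rule D2) (use assms in linarith)
    moreover have "entry (insert (i,j) S) (toggle_step S F (i,j) x) (i'-1+1, j'-1) = entry S F (i'-1+1, j'-1)"
      by (rule D2) (use assms in linarith)
    ultimately show ?thesis unfolding nv_def by simp
  qed
  have nv2: "nv (insert (i',j') S) (toggle_step S F (i',j') y) i j x = nv S F i j x"
  proof -
    have "entry (insert (i',j') S) (toggle_step S F (i',j') y) (i-1, j-1+1) = entry S F (i-1, j-1+1)"
      by (rule D2) (use assms in linarith)
    moreover have "entry (insert (i',j') S) (toggle_step S F (i',j') y) (i-1+1, j-1) = entry S F (i-1+1, j-1)"
      by (rule D2) (use assms in linarith)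
    ultimately show ?thesis unfolding nv_def by simp
  qed
  have dv1: "dv (insert (i,j) S) (toggle_step S F (i,j) x) a b = dv S F a b" if c: "cnd i' j' a b"
  proof -
    have h: "1 \<le> a" "1 \<le> b" "a < i'" "b < j'" "i' - a = j' - b" using c unfolding cnd_def by auto
    have "entry (insert (i,j) S) (toggle_step S F (i,j) x) (a-1,b) = entry S F (a-1,b)"
      "entry (insert (i,j) S) (toggle_step S F (i,j) x) (a,b-1) = entry S F (a,b-1)"
      "entry (insert (i,j) S) (toggle_step S F (i,j) x) (a,b+1) = entry S F (a,b+1)"
      "entry (insert (i,j) S) (toggle_step S F (i,j) x) (a+1,b) = entry S F (a+1,b)"
      "entry (insert (i,j) S) (toggle_step S F (i,j) x) (a,b) = entry S F (a,b)"
      by (rule D2, use assms h in linarith)+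
    then show ?thesis unfolding dv_def by simp
  qed
  have dv2: "dv (insert (i',j') S) (toggle_step S F (i',j') y) a b = dv S F a b" if c: "cnd i j a b"
  proof -
    have h: "1 \<le> a" "1 \<le> b" "a < i" "b < j" "i - a = j - b" using c unfolding cnd_def by auto
    have "entry (insert (i',j') S) (toggle_step S F (i',j') y) (a-1,b) = entry S F (a-1,b)"
      "entry (insert (i',j') S) (toggle_step S F (i',j') y) (a,b-1) = entry S F (a,b-1)"
      "entry (insert (i',j') S) (toggle_step S F (i',j') y) (a,b+1) = entry S F (a,b+1)"
      "entry (insert (i',j') S) (toggle_step S F (i',j') y) (a+1,b) = entry S F (a+1,b)"
      "entry (insert (i',j') S) (toggle_step S F (i',j') y) (a,b) = entry S F (a,b)"
      by (rule D2, use assms h in linarith)+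
    then show ?thesis unfolding dv_def by simp
  qed
  have x1: "\<not> (cnd i j a b \<and> cnd i' j' a b)" using assms unfolding cnd_def by linarith
  have x2: "\<not> cnd i j i' j'" "\<not> cnd i' j' i j" using assms unfolding cnd_def by auto
  have x3: "i \<noteq> i'" "j \<noteq> j'" using assms by auto
  show "toggle_step (insert (i,j) S) (toggle_step S F (i,j) x) (i',j') y (a,b)
       = toggle_step (insert (i',j') S) (toggle_step S F (i',j') y) (i,j) x (a,b)"
  proof (cases "(a,b) = (i,j)")
    case True
    then show ?thesis using x2 x3 by (simp add: ts_eq nv2)
  next
    case nb: False
    show ?thesis
    proof (cases "(a,b) = (i',j')")
      case True
      then show ?thesis using x2 x3 by (simp add: ts_eq nv1)
    next
      case nc: False
      show ?thesis
      proof (cases "cnd i j a b")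
        case True
        then show ?thesis using x1 x2 x3 nb nc by (auto simp add: ts_eq dv2)
      next
        case n1: False
        show ?thesis
        proof (cases "cnd i' j' a b")
          case True
          then show ?thesis using n1 x2 x3 nb nc by (auto simp add: ts_eq dv1)
        next
          case False
          then show ?thesis using n1 x2 x3 nb nc by (auto simp add: ts_eq)
        qed
      qed
    qed
  qed
qed

definition okb :: "box \<Rightarrow> bool" where "okb b \<longleftrightarrow> 1 \<le> fst b \<and> 1 \<le> snd b"

lemma swap:
  assumes "okb b" "okb c" "\<not> box_le b c" "\<not> box_le c b"
  shows "toggle_state T (toggle_state T st b) c = toggle_state T (toggle_state T st c) b"
proof -
  obtain i j i' j' where b: "b = (i,j)" and c: "c = (i',j')" by (cases b, cases c) auto
  have "(i < i' \<and> j' < j) \<or> (i' < i \<and> j < j')" using assms unfolding b c box_le_def by auto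
  then show ?thesis
  proof
    assume "i < i' \<and> j' < j"
    then show ?thesis using assms commute[of i j i' j' "fst st"] unfolding b c okb_def toggle_state_def
      by (auto simp: insert_commute)
  next
    assume "i' < i \<and> j < j'"
    then show ?thesis using assms commute[of i' j' i j "fst st"] unfolding b c okb_def toggle_state_def
      by (auto simp: insert_commute)
  qed
qed

lemma bubble:
  assumes "\<forall>e\<in>set u. okb e \<and> \<not> box_le e b \<and> \<not> box_le b e" "okb b"
  shows "foldl (toggle_state T) st (u @ [b]) = foldl (toggle_state T) st (b # u)"
  using assms
proof (induction u arbitrary: st)
  case Nil
  then show ?case by simp
next
  case (Cons x u)
  have "foldl (toggle_state T) st ((x # u) @ [b]) = foldl (toggle_state T) (toggle_state T st x) (u @ [b])" by simp
  also have "\<dots> = foldl (toggle_state T) (toggle_state T (toggle_state T st x) b) u"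
    using Cons by simp
  also have "toggle_state T (toggle_state T st x) b = toggle_state T (toggle_state T st b) x"
    using Cons.prems by (intro swap) auto
  finally show ?case by simp
qed

definition Rb :: "box \<Rightarrow> box \<Rightarrow> bool" where "Rb x y \<longleftrightarrow> \<not> box_le y x"

lemma sorted_distinct: "sorted_wrt Rb xs \<Longrightarrow> distinct xs"
  by (induction xs) (auto simp: Rb_def box_le_def)

lemma main:
  assumes "sorted_wrt Rb bs1" "sorted_wrt Rb bs2" "set bs1 = set bs2" "\<forall>e\<in>set bs1. okb e"
  shows "foldl (toggle_state T) st bs1 = foldl (toggle_state T) st bs2"
  using assms
proof (induction bs1 arbitrary: st bs2)
  case Nil
  then show ?case by simp
next
  case (Cons b r)
  have refl: "box_le x x" for x unfolding box_le_def by simp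
  have "b \<in> set bs2" using Cons.prems by auto
  then obtain u v where bs2: "bs2 = u @ b # v" by (meson split_list)
  have inc: "\<forall>e\<in>set u. okb e \<and> \<not> box_le e b \<and> \<not> box_le b e"
  proof
    fix e assume e: "e \<in> set u"
    have "\<not> box_le b e" using Cons.prems(2) e unfolding bs2 Rb_def by (auto simp: sorted_wrt_append)
    moreover have "e \<noteq> b" using Cons.prems(2) e refl[of b] unfolding bs2 Rb_def by (auto simp: sorted_wrt_append)
    moreover have "e \<in> set r" using e `e \<noteq> b` Cons.prems(3) unfolding bs2 by auto
    then have "\<not> box_le e b" using Cons.prems(1) unfolding Rb_def by auto
    ultimately show "okb e \<and> \<not> box_le e b \<and> \<not> box_le b e" using Cons.prems(3,4) e unfolding bs2 by auto
  qed
  have d1: "distinct (b # r)" using Cons.prems(1) by (rule sorted_distinct)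
  have d2: "distinct bs2" using Cons.prems(2) by (rule sorted_distinct)
  have sr: "set r = set (u @ v)" using d1 d2 Cons.prems(3) unfolding bs2 by auto
  have "foldl (toggle_state T) st bs2 = foldl (toggle_state T) (foldl (toggle_state T) st (u @ [b])) v"
    unfolding bs2 by simp
  also have "\<dots> = foldl (toggle_state T) (toggle_state T st b) (u @ v)"
    using bubble[OF inc] Cons.prems(4) by simp
  also have "\<dots> = foldl (toggle_state T) (toggle_state T st b) r"
    using Cons.prems sr by (intro Cons.IH[symmetric]) (auto simp: bs2 sorted_wrt_append)
  finally show ?case by simp
qed

lemma le_sorted: "linear_extension lam bs \<Longrightarrow> sorted_wrt Rb bs"
  unfolding linear_extension_def Rb_def sorted_wrt_iff_nth_less
proof (intro allI impI notI)
  fix i j assume a: "distinct bs \<and> set bs = boxes lam \<and>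
     (\<forall>p < length bs. \<forall>q < length bs. box_le (bs ! p) (bs ! q) \<longrightarrow> p \<le> q)"
    and "i < j" "j < length bs" "box_le (bs ! j) (bs ! i)"
  then have "j \<le> i" by (meson less_trans)
  then show False using \<open>i < j\<close> by simp
qed

theorem proposition2p4:
  fixes lam :: "nat list" and T :: "nat \<times> nat \<Rightarrow> nat" and bs1 bs2 :: "(nat \<times> nat) list"
  assumes "partition lam"
    and "linear_extension lam bs1"
    and "linear_extension lam bs2"
  shows "hat T bs1 = hat T bs2"
proof -
  have "\<forall>e\<in>set bs1. okb e" using assms(2) unfolding linear_extension_def boxes_def okb_def by auto
  then show ?thesis unfolding hat_def using main[OF le_sorted[OF assms(2)] le_sorted[OF assms(3)]] assms(2,3)
    unfolding linear_extension_def by metis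
qed

end
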